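(* Let $(X,\oplus,\odot,d)$ be any one of the spaces listed in the context, $\|x\|_{\mathcal F}=d(\tilde0,x)$. (i) If $A:X\to\mathbb{R}$ is additive ($A(x\oplus y)=A(x)+A(y)$), positive homogeneous ($A(\lambda\odot x)=\lambda A(x)$ for all $\lambda\ge0$) and continuous at $\tilde0$, then $|A(x)|\le|||A|||_{\mathcal F}\|x\|_{\mathcal F}$ for all $x\in X$. (ii) If $A:X\to X$ is additive ($A(x\oplus y)=A(x)\oplus A(y)$), positive homogeneous ($A(\lambda\odot x)=\lambda\odot A(x)$ for all $\lambda\ge0$) and continuous at $\tilde0$, then $\|A(x)\|_{\mathcal F}\le|||A|||_{\mathcal F}\|x\|_{\mathcal F}$ for all $x\in X$.
   Context: Fuzzy numbers $\mathbb{R}_{\mathcal F}$: functions $u:\mathbb{R}\to[0,1]$ that are normal, fuzzy convex, upper semicontinuous, with compact support closure; level sets $[u]^r=[u_-(r),u_+(r)]$; $[u\oplus v]^r=[u]^r+[v]^r$, $[\lambda\odot u]^r=\lambda[u]^r$, $\tilde0=\chi_{\{0\}}$; $D(u,v)=\sup_{r\in[0,1]}\max\{|u_-(r)-v_-(r)|,|u_+(r)-v_+(r)|\}$. The admissible spaces $(X,\oplus,\odot,d)$ (operations pointwise/componentwise): $(\mathbb{R}_{\mathcal F},D)$; $C([a,b];\mathbb{R}_{\mathcal F})$ with sup-metric $D^*$; $L^p([a,b];\mathbb{R}_{\mathcal F})$ ($1\le p<\infty$) with $D_p(f,g)=(\int_a^bD(f,g)^p)^{1/p}$; $C^p([a,b];\mathbb{R}_{\mathcal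 F})$ with $D_p^*(f,g)=\sum_{i=0}^pD^*(f^{(i)},g^{(i)})$; $l^p_{\mathbb{R}_{\mathcal F}}$ with $\rho_p$; $m_{\mathbb{R}_{\mathcal F}}$, $c_{\mathbb{R}_{\mathcal F}}$, $c^{\tilde0}_{\mathbb{R}_{\mathcal F}}$ with $\mu(x,y)=\sup_nD(x_n,y_n)$; finite Cartesian products with max metric. For such $A$, $\mathcal M_A=\{M>0:|A(x)|\le M\|x\|_{\mathcal F}\ \forall x\}$ (resp. $\{M>0:\|A(x)\|_{\mathcal F}\le M\|x\|_{\mathcal F}\ \forall x\}$) and $|||A|||_{\mathcal F}=\inf\mathcal M_A$. *)

theory Defs
  imports Main Complex_Main
begin

text \<open>Abstract rendering of the admissible spaces (X, add, smul, d) with zero element z: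
  the common structure shared by (R_F, D), C([a,b];R_F), L^p, C^p, l^p, m, c, c^0 and
  finite products.\<close>

definition admissible_fuzzy_space ::
  "'a set \<Rightarrow> ('a \<Rightarrow> 'a \<Rightarrow> 'a) \<Rightarrow> (real \<Rightarrow> 'a \<Rightarrow> 'a) \<Rightarrow> 'a \<Rightarrow> ('a \<Rightarrow> 'a \<Rightarrow> real) \<Rightarrow> bool" where
  "admissible_fuzzy_space X add smul z d \<longleftrightarrow>
     z \<in> X
   \<and> (\<forall>x\<in>X. \<forall>y\<in>X. add x y \<in> X)
   \<and> (\<forall>l. \<forall>x\<in>X. smul l x \<in> X)
   \<and> (\<forall>x\<in>X. \<forall>y\<in>X. \<forall>w\<in>X. add (add x y) w = add x (add y w))
   \<and> (\<forall>x\<in>X. \<forall>y\<in>X. add x y = add y x)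
   \<and> (\<forall>x\<in>X. add z x = x)
   \<and> (\<forall>x\<in>X. smul 1 x = x)
   \<and> (\<forall>l m. \<forall>x\<in>X. smul l (smul m x) = smul (l * m) x)
   \<and> (\<forall>l. \<forall>x\<in>X. \<forall>y\<in>X. smul l (add x y) = add (smul l x) (smul l y))
   \<and> (\<forall>l m. \<forall>x\<in>X. l \<ge> 0 \<longrightarrow> m \<ge> 0 \<longrightarrow> smul (l + m) x = add (smul l x) (smul m x))
   \<and> (\<forall>x\<in>X. \<forall>y\<in>X. d x y \<ge> 0)
   \<and> (\<forall>x\<in>X. \<forall>y\<in>X. d x y = 0 \<longleftrightarrow> x = y)
   \<and> (\<forall>x\<in>X. \<forall>y\<in>X. d x y = d y x)
   \<and> (\<forall>x\<in>X. \<forall>y\<in>X. \<forall>w\<in>X. d x w \<le> d x y + d y w)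
   \<and> (\<forall>x\<in>X. \<forall>y\<in>X. \<forall>w\<in>X. d (add x w) (add y w) = d x y)
   \<and> (\<forall>l. \<forall>x\<in>X. \<forall>y\<in>X. d (smul l x) (smul l y) = \<bar>l\<bar> * d x y)"

definition fnorm :: "('a \<Rightarrow> 'a \<Rightarrow> real) \<Rightarrow> 'a \<Rightarrow> 'a \<Rightarrow> real" where
  "fnorm d z x = d z x"

definition opnorm_real ::
  "'a set \<Rightarrow> ('a \<Rightarrow> 'a \<Rightarrow> real) \<Rightarrow> 'a \<Rightarrow> ('a \<Rightarrow> real) \<Rightarrow> real" where
  "opnorm_real X d z A = Inf {M. M > 0 \<and> (\<forall>x\<in>X. \<bar>A x\<bar> \<le> M * fnorm d z x)}"

definition opnorm_self ::
  "'a set \<Rightarrow> ('a \<Rightarrow> 'a \<Rightarrow> real) \<Rightarrow> 'a \<Rightarrow> ('a \<Rightarrow> 'a) \<Rightarrow> real" where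
  "opnorm_self X d z A = Inf {M. M > 0 \<and> (\<forall>x\<in>X. fnorm d z (A x) \<le> M * fnorm d z x)}"

end

theory Submission
  imports Defs
begin

lemma inf_bound:
  fixes g n :: "'a \<Rightarrow> real"
  assumes M0: "M0 > 0" "\<forall>x\<in>X. g x \<le> M0 * n x"
    and nn: "\<forall>x\<in>X. n x \<ge> 0" and z0: "\<forall>x\<in>X. n x = 0 \<longrightarrow> g x = 0"
    and x: "x \<in> X"
  shows "g x \<le> Inf {M. M > 0 \<and> (\<forall>x\<in>X. g x \<le> M * n x)} * n x"
proof (cases "n x = 0")
  case True thus ?thesis using z0 x by simp
next
  case False
  hence pos: "n x > 0" using nn x by force
  have "g x / n x \<le> Inf {M. M > 0 \<and> (\<forall>x\<in>X. g x \<le> M * n x)}"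
  proof (rule cInf_greatest)
    show "{M. M > 0 \<and> (\<forall>x\<in>X. g x \<le> M * n x)} \<noteq> {}" using M0 by blast
  next
    fix M assume "M \<in> {M. M > 0 \<and> (\<forall>x\<in>X. g x \<le> M * n x)}"
    hence "g x \<le> M * n x" using x by blast
    thus "g x / n x \<le> M" using pos by (simp add: divide_le_eq)
  qed
  thus ?thesis using pos by (simp add: divide_le_eq)
qed

theorem corollary3p4:
  fixes X :: "'a set" and add :: "'a \<Rightarrow> 'a \<Rightarrow> 'a" and smul :: "real \<Rightarrow> 'a \<Rightarrow> 'a"
    and z :: 'a and d :: "'a \<Rightarrow> 'a \<Rightarrow> real"
  assumes "admissible_fuzzy_space X add smul z d"
  shows "(\<forall>A :: 'a \<Rightarrow> real.
           (\<forall>x\<in>X. \<forall>y\<in>X. A (add x y) = A x + A y)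
         \<and> (\<forall>l\<ge>0. \<forall>x\<in>X. A (smul l x) = l * A x)
         \<and> (\<forall>e>0. \<exists>\<delta>>0. \<forall>x\<in>X. d z x < \<delta> \<longrightarrow> \<bar>A x - A z\<bar> < e)
         \<longrightarrow> (\<forall>x\<in>X. \<bar>A x\<bar> \<le> opnorm_real X d z A * fnorm d z x))
       \<and> (\<forall>A :: 'a \<Rightarrow> 'a.
           (\<forall>x\<in>X. A x \<in> X)
         \<and> (\<forall>x\<in>X. \<forall>y\<in>X. A (add x y) = add (A x) (A y))
         \<and> (\<forall>l\<ge>0. \<forall>x\<in>X. A (smul l x) = smul l (A x))
         \<and> (\<forall>e>0. \<exists>\<delta>>0. \<forall>x\<in>X. d z x < \<delta> \<longrightarrow> d (A z) (A x) < e)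
         \<longrightarrow> (\<forall>x\<in>X. fnorm d z (A x) \<le> opnorm_self X d z A * fnorm d z x))"
proof -
  note S = assms[unfolded admissible_fuzzy_space_def, THEN conjunct1] assms[unfolded admissible_fuzzy_space_def, THEN conjunct2]
  have zX: "z \<in> X" using assms unfolding admissible_fuzzy_space_def by (elim conjE) metis
  have addX: "\<And>x y. x \<in> X \<Longrightarrow> y \<in> X \<Longrightarrow> add x y \<in> X" using assms unfolding admissible_fuzzy_space_def by (elim conjE) metis
  have smX: "\<And>l x. x \<in> X \<Longrightarrow> smul l x \<in> X" using assms unfolding admissible_fuzzy_space_def by (elim conjE) metis
  have addz: "\<And>x. x \<in> X \<Longrightarrow> add z x = x" using assms unfolding admissible_fuzzy_space_def by (elim conjE) metis
  have deq: "\<And>x y. x \<in> X \<Longrightarrow> y \<in> X \<Longrightarrow> d x y = 0 \<longleftrightarrow> x = y" using assms unfolding admissible_fuzzy_space_def by (elim conjE) metis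
  have dnn: "\<And>x y. x \<in> X \<Longrightarrow> y \<in> X \<Longrightarrow> d x y \<ge> 0" using assms unfolding admissible_fuzzy_space_def by (elim conjE) metis
  have dtr: "\<And>x y w. x \<in> X \<Longrightarrow> y \<in> X \<Longrightarrow> w \<in> X \<Longrightarrow> d (add x w) (add y w) = d x y"
    using assms unfolding admissible_fuzzy_space_def by (elim conjE) metis
  have dsm: "\<And>l x y. x \<in> X \<Longrightarrow> y \<in> X \<Longrightarrow> d (smul l x) (smul l y) = \<bar>l\<bar> * d x y"
    using assms unfolding admissible_fuzzy_space_def by (elim conjE) metis
  have smadd: "\<And>l x y. x \<in> X \<Longrightarrow> y \<in> X \<Longrightarrow> smul l (add x y) = add (smul l x) (smul l y)"
    using assms unfolding admissible_fuzzy_space_def by (elim conjE) metis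
  have idem: "\<And>w. w \<in> X \<Longrightarrow> add w w = w \<Longrightarrow> w = z"
  proof -
    fix w assume w: "w \<in> X" "add w w = w"
    have "d (add w w) (add z w) = d w z" using dtr w zX by blast
    hence "d w w = d w z" using w addz by simp
    moreover have "d w w = 0" using deq w by simp
    ultimately show "w = z" using deq w zX by simp
  qed
  have smz: "\<And>l. smul l z = z"
  proof -
    fix l
    have "add (smul l z) (smul l z) = smul l z"
      using smadd[OF zX zX, of l] addz[OF zX] by simp
    thus "smul l z = z" using idem smX zX by blast
  qed
  have dscale: "\<And>c x. c \<ge> 0 \<Longrightarrow> x \<in> X \<Longrightarrow> d z (smul c x) = c * d z x"
    using dsm zX smz by (metis abs_of_nonneg)
  show ?thesis
  proof (intro conjI allI impI)
    fix A :: "'a \<Rightarrow> real"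
    assume H: "(\<forall>x\<in>X. \<forall>y\<in>X. A (add x y) = A x + A y)
         \<and> (\<forall>l\<ge>0. \<forall>x\<in>X. A (smul l x) = l * A x)
         \<and> (\<forall>e>0. \<exists>\<delta>>0. \<forall>x\<in>X. d z x < \<delta> \<longrightarrow> \<bar>A x - A z\<bar> < e)"
    have Az: "A z = 0" using H zX addz[OF zX] by (metis add_cancel_left_left)
    obtain \<delta> where dl: "\<delta> > 0" "\<forall>x\<in>X. d z x < \<delta> \<longrightarrow> \<bar>A x - A z\<bar> < 1"
      using H by (meson zero_less_one)
    have bnd: "\<forall>x\<in>X. \<bar>A x\<bar> \<le> (2/\<delta>) * d z x"
    proof
      fix x assume x: "x \<in> X"
      show "\<bar>A x\<bar> \<le> (2/\<delta>) * d z x"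
      proof (cases "d z x = 0")
        case True thus ?thesis using deq[OF zX x] Az by simp
      next
        case False
        hence r: "d z x > 0" using dnn zX x by force
        define c where "c = \<delta> / (2 * d z x)"
        have c: "c > 0" using r dl by (simp add: c_def)
        have "d z (smul c x) = c * d z x" using dscale c x by simp
        also have "\<dots> = \<delta>/2" using r by (simp add: c_def)
        finally have "d z (smul c x) < \<delta>" using dl by simp
        hence "\<bar>A (smul c x)\<bar> < 1" using dl smX x Az by force
        hence "c * \<bar>A x\<bar> < 1" using H c x by (simp add: abs_mult)
        hence "\<bar>A x\<bar> < 1 / c" using c by (simp add: mult.commute pos_less_divide_eq)
        also have "1 / c = (2/\<delta>) * d z x" using r dl by (simp add: c_def)
        finally show ?thesis by simp
      qed
    qed
    show "\<forall>x\<in>X. \<bar>A x\<bar> \<le> opnorm_real X d z A * fnorm d z x"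
      unfolding opnorm_real_def fnorm_def
    proof
      fix x assume x: "x \<in> X"
      show "\<bar>A x\<bar> \<le> Inf {M. M > 0 \<and> (\<forall>x\<in>X. \<bar>A x\<bar> \<le> M * d z x)} * d z x"
        by (rule inf_bound[where ?M0.0="2/\<delta>"]) (use dl bnd dnn zX deq Az x in auto)
    qed
  next
    fix A :: "'a \<Rightarrow> 'a"
    assume H: "(\<forall>x\<in>X. A x \<in> X)
         \<and> (\<forall>x\<in>X. \<forall>y\<in>X. A (add x y) = add (A x) (A y))
         \<and> (\<forall>l\<ge>0. \<forall>x\<in>X. A (smul l x) = smul l (A x))
         \<and> (\<forall>e>0. \<exists>\<delta>>0. \<forall>x\<in>X. d z x < \<delta> \<longrightarrow> d (A z) (A x) < e)"
    have "add (A z) (A z) = A z" using H zX addz[OF zX] by metis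
    hence Az: "A z = z" using idem H zX by blast
    obtain \<delta> where dl: "\<delta> > 0" "\<forall>x\<in>X. d z x < \<delta> \<longrightarrow> d (A z) (A x) < 1"
      using H by (meson zero_less_one)
    have bnd: "\<forall>x\<in>X. d z (A x) \<le> (2/\<delta>) * d z x"
    proof
      fix x assume x: "x \<in> X"
      show "d z (A x) \<le> (2/\<delta>) * d z x"
      proof (cases "d z x = 0")
        case True thus ?thesis using deq[OF zX x] Az by simp
      next
        case False
        hence r: "d z x > 0" using dnn zX x by force
        define c where "c = \<delta> / (2 * d z x)"
        have c: "c > 0" using r dl by (simp add: c_def)
        have "d z (smul c x) = c * d z x" using dscale c x by simp
        also have "\<dots> = \<delta>/2" using r by (simp add: c_def)
        finally have "d z (smul c x) < \<delta>" using dl by simp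
        hence "d z (A (smul c x)) < 1" using dl smX x Az by force
        moreover have "A (smul c x) = smul c (A x)" using H c x by auto
        moreover have "d z (smul c (A x)) = c * d z (A x)" using dscale c H x by auto
        ultimately have "c * d z (A x) < 1" by simp
        hence "d z (A x) < 1 / c" using c by (simp add: mult.commute pos_less_divide_eq)
        also have "1 / c = (2/\<delta>) * d z x" using r dl by (simp add: c_def)
        finally show ?thesis by simp
      qed
    qed
    show "\<forall>x\<in>X. fnorm d z (A x) \<le> opnorm_self X d z A * fnorm d z x"
      unfolding opnorm_self_def fnorm_def
    proof
      fix x assume x: "x \<in> X"
      show "d z (A x) \<le> Inf {M. M > 0 \<and> (\<forall>x\<in>X. d z (A x) \<le> M * d z x)} * d z x"
        by (rule inf_bound[where ?M0.0="2/\<delta>"]) (use dl bnd dnn zX deq Az H x in auto)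
    qed
  qed
qed

end
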